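(* Let $n\ge2$, let $\mathbf{A}=(a_{ij})$ be an $n\times n$ matrix over a field, let $t=\lfloor n/2\rfloor+1$, and assume $a_{it}\ne0$ for all $i\in[n]$. Let $\mathbf{A}|_t$ be the matrix with $(i,j)$ entry $a_{ij}/a_{it}$. Then $\mathrm{per}(\mathbf{A})=\big(\prod_{i=1}^n a_{it}\big)\,\mathrm{per}(\mathbf{A}|_t)$, and the following procedure computes $\mathrm{per}(\mathbf{A})$: (i) compute the $n(n-1)$ entries $a_{ij}/a_{it}$, $j\neq t$; (ii) compute the sum-product flow on $\mathcal{T}_n(\mathbf{A}|_t)$, where one multiplication is performed for each edge not leaving the root and not entering layer $V_t$ (edges into $V_t$ have label $1$), and $|E|-|V|+1$ additions are performed; (iii) multiply $\mu(\mathrm{toor})$ by $a_{1t},\dots,a_{nt}$ one at a time. The total number of multiplications/divisions used is exactly $$n2^{n-1}-\left\lceil \tfrac n2\right\rceil\binom{n}{\lfloor n/2\rfloor}+n^2-n,$$ and the number of additions is exactly $(n-2)2^{n-1}+1$.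
   Context: $\mathrm{per}(\mathbf{A})=\sum_{\boldsymbol\sigma\in\mathbb{S}_n}\prod_{i=1}^n a_{i\sigma_i}$. The canonical permutation trellis $\mathcal{T}_n$ has layers $V_j$ = all $j$-subsets of $[n]$, an edge $(u,v)\in V_{j-1}\times V_j$ iff $u\subset v$, labeled by the $i$ with $v\setminus u=\{i\}$; $\mathcal{T}_n(\mathbf{B})$ relabels the edge from $V_{j-1}$ to $V_j$ with label $i$ by $b_{ij}$. The sum-product flow: $\mu(\mathrm{root})=1$, $\mu(v)=\sum_{(u,v)\in E}L(u,v)\mu(u)$; then $\mu(\mathrm{toor})=\mathrm{per}(\mathbf{B})$ on $\mathcal{T}_n(\mathbf{B})$. In $\mathcal{T}_n$, $|V|=2^n$, $|E|=n2^{n-1}$, and the number of edges from $V_{t-1}$ to $V_t$ is $(n-t+1)\binom{n}{t-1}$. *)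

theory Defs
  imports Complex_Main "HOL-Combinatorics.Permutations"
begin

text \<open>Matrices are functions nat => nat => 'a, rows and columns indexed by 1..n.\<close>

definition per :: "nat \<Rightarrow> (nat \<Rightarrow> nat \<Rightarrow> 'a::comm_ring_1) \<Rightarrow> 'a" where
  "per n A = (\<Sum>\<sigma> | \<sigma> permutes {1..n}. \<Prod>i=1..n. A i (\<sigma> i))"

definition col_normalize :: "(nat \<Rightarrow> nat \<Rightarrow> 'a::field) \<Rightarrow> nat \<Rightarrow> (nat \<Rightarrow> nat \<Rightarrow> 'a)" where
  "col_normalize A t = (\<lambda>i j. A i j / A i t)"

definition trellis_vertices :: "nat \<Rightarrow> nat set set" where
  "trellis_vertices n = {S. S \<subseteq> {1..n}}"

definition trellis_layer :: "nat \<Rightarrow> nat \<Rightarrow> nat set set" where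
  "trellis_layer n j = {S. S \<subseteq> {1..n} \<and> card S = j}"

definition trellis_edges :: "nat \<Rightarrow> (nat set \<times> nat set) set" where
  "trellis_edges n = {(u, v). u \<subseteq> {1..n} \<and> v \<subseteq> {1..n} \<and> u \<subset> v \<and> card v = Suc (card u)}"

definition edge_index :: "nat set \<times> nat set \<Rightarrow> nat" where
  "edge_index e = the_elem (snd e - fst e)"

definition trellis_label :: "(nat \<Rightarrow> nat \<Rightarrow> 'a) \<Rightarrow> nat set \<times> nat set \<Rightarrow> 'a" where
  "trellis_label B e = B (edge_index e) (card (snd e))"

fun flow_at :: "nat \<Rightarrow> (nat \<Rightarrow> nat \<Rightarrow> 'a::comm_ring_1) \<Rightarrow> nat \<Rightarrow> nat set \<Rightarrow> 'a" where
  "flow_at n B 0 v = (if v = {} then 1 else 0)"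
| "flow_at n B (Suc j) v =
     (\<Sum>e \<in> {e \<in> trellis_edges n. snd e = v}. trellis_label B e * flow_at n B j (fst e))"

definition mu :: "nat \<Rightarrow> (nat \<Rightarrow> nat \<Rightarrow> 'a::comm_ring_1) \<Rightarrow> nat set \<Rightarrow> 'a" where
  "mu n B v = flow_at n B (card v) v"

text \<open>root = {} (layer V_0), toor = [n] (layer V_n).\<close>
definition toor :: "nat \<Rightarrow> nat set" where
  "toor n = {1..n}"

text \<open>Operation counts of the procedure.
 (i) one division per entry (i,j), j ~= t;
 (ii) one multiplication per edge not leaving the root and not entering V_t;
      at each non-root vertex v, (indegree v - 1) additions;
 (iii) one multiplication per factor a_1t, ..., a_nt.\<close>
definition mult_div_count :: "nat \<Rightarrow> nat \<Rightarrow> nat" where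
  "mult_div_count n t =
     card {(i, j). i \<in> {1..n} \<and> j \<in> {1..n} \<and> j \<noteq> t}
   + card {e \<in> trellis_edges n. fst e \<noteq> {} \<and> snd e \<notin> trellis_layer n t}
   + card {1..n}"

definition add_count :: "nat \<Rightarrow> nat" where
  "add_count n = (\<Sum>v \<in> trellis_vertices n - {{}}. card {e \<in> trellis_edges n. snd e = v} - 1)"

end

theory Submission
  imports Defs
begin

lemma edge_char:
  assumes "(u, v) \<in> trellis_edges n"
  shows "\<exists>i\<in>v. u = v - {i} \<and> v - u = {i}"
proof -
  from assms have uv: "u \<subseteq> {1..n}" "v \<subseteq> {1..n}" "u \<subset> v" "card v = Suc (card u)"
    by (auto simp: trellis_edges_def)
  have fv: "finite v" using uv(2) finite_subset by blast
  have "card (v - u) = 1" using uv fv by (simp add: card_Diff_subset finite_subset)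
  then obtain i where i: "v - u = {i}" by (auto simp: card_Suc_eq)
  then have "i \<in> v" "u = v - {i}" using uv(3) by auto
  then show ?thesis using i by blast
qed

lemma edges_into:
  assumes "v \<subseteq> {1..n}"
  shows "{e \<in> trellis_edges n. snd e = v} = (\<lambda>i. (v - {i}, v)) ` v"
proof -
  have fv: "finite v" using assms finite_subset by blast
  show ?thesis
  proof (intro equalityI subsetI)
    fix e assume "e \<in> {e \<in> trellis_edges n. snd e = v}"
    then obtain u where "e = (u, v)" "(u, v) \<in> trellis_edges n" by (cases e) auto
    then show "e \<in> (\<lambda>i. (v - {i}, v)) ` v" using edge_char by blast
  next
    fix e assume "e \<in> (\<lambda>i. (v - {i}, v)) ` v"
    then obtain i where "i \<in> v" "e = (v - {i}, v)" by auto
    then show "e \<in> {e \<in> trellis_edges n. snd e = v}"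
      using assms fv by (auto simp: trellis_edges_def card_Diff_singleton_if)
        (metis Suc_pred card_gt_0_iff empty_iff)
  qed
qed

lemma card_edges_into:
  assumes "v \<subseteq> {1..n}"
  shows "card {e \<in> trellis_edges n. snd e = v} = card v"
  unfolding edges_into[OF assms]
  by (rule card_image) (auto simp: inj_on_def)

lemma edge_index_simp: "i \<in> v \<Longrightarrow> edge_index (v - {i}, v) = i"
  by (simp add: edge_index_def Diff_Diff_Int)

lemma flow_Suc:
  assumes "v \<subseteq> {1..n}"
  shows "flow_at n B (Suc j) v = (\<Sum>i\<in>v. B i (card v) * flow_at n B j (v - {i}))"
proof -
  have "flow_at n B (Suc j) v = (\<Sum>e\<in>(\<lambda>i. (v - {i}, v)) ` v. trellis_label B e * flow_at n B j (fst e))"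
    by (simp add: edges_into[OF assms])
  also have "\<dots> = (\<Sum>i\<in>v. B i (card v) * flow_at n B j (v - {i}))"
    by (subst sum.reindex) (auto simp: inj_on_def trellis_label_def edge_index_simp)
  finally show ?thesis .
qed

definition Fs :: "nat \<Rightarrow> nat set \<Rightarrow> (nat \<Rightarrow> nat) set" where
  "Fs j v = {f. bij_betw f {1..j} v \<and> (\<forall>k. k \<notin> {1..j} \<longrightarrow> f k = k)}"

lemma Fs_Suc: "Fs (Suc j) v = (\<Union>i\<in>v. (\<lambda>g. g(Suc j := i)) ` Fs j (v - {i}))"
proof (intro equalityI subsetI)
  fix f assume "f \<in> Fs (Suc j) v"
  then have bf: "bij_betw f {1..Suc j} v" and out: "\<forall>k. k \<notin> {1..Suc j} \<longrightarrow> f k = k"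
    by (auto simp: Fs_def)
  define i where "i = f (Suc j)"
  have iv: "i \<in> v" unfolding i_def by (rule bij_betw_apply[OF bf]) simp
  define g where "g = f(Suc j := Suc j)"
  have "bij_betw f ({1..Suc j} - {Suc j}) (v - {i})"
    by (rule bij_betw_DiffI[OF bf]) (use iv in \<open>auto simp: i_def\<close>)
  moreover have "{1..Suc j} - {Suc j} = {1..j}" by auto
  ultimately have "bij_betw f {1..j} (v - {i})" by simp
  then have "bij_betw g {1..j} (v - {i})"
    by (rule bij_betw_cong[THEN iffD1, rotated]) (auto simp: g_def)
  moreover have "\<forall>k. k \<notin> {1..j} \<longrightarrow> g k = k" using out by (auto simp: g_def)
  ultimately have "g \<in> Fs j (v - {i})" by (simp add: Fs_def)
  moreover have "f = g(Suc j := i)" by (auto simp: g_def i_def)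
  ultimately show "f \<in> (\<Union>i\<in>v. (\<lambda>g. g(Suc j := i)) ` Fs j (v - {i}))" using iv by blast
next
  fix f assume "f \<in> (\<Union>i\<in>v. (\<lambda>g. g(Suc j := i)) ` Fs j (v - {i}))"
  then obtain i g where iv: "i \<in> v" and g: "g \<in> Fs j (v - {i})" and f: "f = g(Suc j := i)" by blast
  from g have bg: "bij_betw g {1..j} (v - {i})" and out: "\<forall>k. k \<notin> {1..j} \<longrightarrow> g k = k"
    by (auto simp: Fs_def)
  have "bij_betw f {1..j} (v - {i})"
    using bg by (rule bij_betw_cong[THEN iffD1, rotated]) (auto simp: f)
  moreover have "bij_betw f {Suc j} {i}" by (simp add: f)
  ultimately have "bij_betw f ({1..j} \<union> {Suc j}) ((v - {i}) \<union> {i})"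
    by (rule bij_betw_combine) auto
  moreover have "{1..j} \<union> {Suc j} = {1..Suc j}" by auto
  moreover have "(v - {i}) \<union> {i} = v" using iv by auto
  ultimately have "bij_betw f {1..Suc j} v" by simp
  moreover have "\<forall>k. k \<notin> {1..Suc j} \<longrightarrow> f k = k" using out by (auto simp: f)
  ultimately show "f \<in> Fs (Suc j) v" by (simp add: Fs_def)
qed

lemma Fs_0: "Fs 0 {} = {id}"
  by (auto simp: Fs_def)

lemma flow_formula:
  "\<forall>v. v \<subseteq> {1..n} \<longrightarrow> card v = j \<longrightarrow> finite (Fs j v) \<and>
      flow_at n B j v = (\<Sum>f\<in>Fs j v. \<Prod>k=1..j. B (f k) k)"
proof (induction j)
  case 0
  show ?case
  proof (intro allI impI)
    fix v :: "nat set" assume "v \<subseteq> {1..n}" "card v = 0"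
    then have "v = {}" using finite_subset by fastforce
    then show "finite (Fs 0 v) \<and> flow_at n B 0 v = (\<Sum>f\<in>Fs 0 v. \<Prod>k=1..0. B (f k) k)"
      by (simp add: Fs_0)
  qed
next
  case (Suc j)
  show ?case
  proof (intro allI impI)
    fix v :: "nat set" assume vs: "v \<subseteq> {1..n}" and cv: "card v = Suc j"
    have fv: "finite v" using vs finite_subset by blast
    have IH: "\<And>i. i \<in> v \<Longrightarrow> finite (Fs j (v - {i})) \<and>
      flow_at n B j (v - {i}) = (\<Sum>f\<in>Fs j (v - {i}). \<Prod>k=1..j. B (f k) k)"
    proof -
      fix i assume "i \<in> v"
      then have "v - {i} \<subseteq> {1..n}" "card (v - {i}) = j" using vs cv fv by auto
      then show "finite (Fs j (v - {i})) \<and>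
      flow_at n B j (v - {i}) = (\<Sum>f\<in>Fs j (v - {i}). \<Prod>k=1..j. B (f k) k)"
        using Suc.IH by simp
    qed
    have inj: "inj_on (\<lambda>g. g(Suc j := i)) (Fs j w)" for i w
    proof (rule inj_onI)
      fix g1 g2 assume "g1 \<in> Fs j w" "g2 \<in> Fs j w" "g1(Suc j := i) = g2(Suc j := i)"
      then have e: "g1(Suc j := i) = g2(Suc j := i)" and "g1 (Suc j) = Suc j" "g2 (Suc j) = Suc j"
        by (auto simp: Fs_def)
      show "g1 = g2"
      proof
        fix x show "g1 x = g2 x"
        proof (cases "x = Suc j")
          case True then show ?thesis using \<open>g1 (Suc j) = Suc j\<close> \<open>g2 (Suc j) = Suc j\<close> by simp
        next
          case False then show ?thesis using fun_cong[OF e, of x] by simp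
        qed
      qed
    qed
    have fin: "finite (Fs (Suc j) v)" unfolding Fs_Suc using IH fv by auto
    have "(\<Sum>f\<in>Fs (Suc j) v. \<Prod>k=1..Suc j. B (f k) k)
        = (\<Sum>i\<in>v. \<Sum>f\<in>(\<lambda>g. g(Suc j := i)) ` Fs j (v - {i}). \<Prod>k=1..Suc j. B (f k) k)"
      unfolding Fs_Suc
    proof (rule sum.UNION_disjoint)
      show "finite v" by fact
      show "\<forall>i\<in>v. finite ((\<lambda>g. g(Suc j := i)) ` Fs j (v - {i}))" using IH by auto
      show "\<forall>i\<in>v. \<forall>i'\<in>v. i \<noteq> i' \<longrightarrow>
          (\<lambda>g. g(Suc j := i)) ` Fs j (v - {i}) \<inter> (\<lambda>g. g(Suc j := i')) ` Fs j (v - {i'}) = {}"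
      proof (intro ballI impI equals0I)
        fix i i' f assume "i \<noteq> i'"
          "f \<in> (\<lambda>g. g(Suc j := i)) ` Fs j (v - {i}) \<inter> (\<lambda>g. g(Suc j := i')) ` Fs j (v - {i'})"
        then have a1: "f \<in> (\<lambda>g. g(Suc j := i)) ` Fs j (v - {i})" and a2: "f \<in> (\<lambda>g. g(Suc j := i')) ` Fs j (v - {i'})"
          by auto
        from a1 have "f (Suc j) = i" by auto
        moreover from a2 have "f (Suc j) = i'" by auto
        ultimately have "i = i'" by simp
        then show False using \<open>i \<noteq> i'\<close> by simp
      qed
    qed
    also have "\<dots> = (\<Sum>i\<in>v. \<Sum>g\<in>Fs j (v - {i}). B i (Suc j) * (\<Prod>k=1..j. B (g k) k))"
    proof (rule sum.cong[OF refl])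
      fix i assume "i \<in> v"
      have "(\<Sum>f\<in>(\<lambda>g. g(Suc j := i)) ` Fs j (v - {i}). \<Prod>k=1..Suc j. B (f k) k)
          = (\<Sum>g\<in>Fs j (v - {i}). \<Prod>k=1..Suc j. B ((g(Suc j := i)) k) k)"
        by (rule sum.reindex[OF inj, unfolded comp_def])
      also have "\<dots> = (\<Sum>g\<in>Fs j (v - {i}). B i (Suc j) * (\<Prod>k=1..j. B (g k) k))"
      proof (rule sum.cong[OF refl])
        fix g
        have "(\<Prod>k=1..j. B ((g(Suc j := i)) k) k) = (\<Prod>k=1..j. B (g k) k)"
          by (rule prod.cong) auto
        then show "(\<Prod>k=1..Suc j. B ((g(Suc j := i)) k) k) = B i (Suc j) * (\<Prod>k=1..j. B (g k) k)"
          by (simp add: prod.cl_ivl_Suc)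
      qed
      finally show "(\<Sum>f\<in>(\<lambda>g. g(Suc j := i)) ` Fs j (v - {i}). \<Prod>k=1..Suc j. B (f k) k)
          = (\<Sum>g\<in>Fs j (v - {i}). B i (Suc j) * (\<Prod>k=1..j. B (g k) k))" .
    qed
    also have "\<dots> = (\<Sum>i\<in>v. B i (card v) * flow_at n B j (v - {i}))"
      using IH cv by (simp add: sum_distrib_left)
    also have "\<dots> = flow_at n B (Suc j) v" using flow_Suc[OF vs, of B j] by (rule sym)
    finally show "finite (Fs (Suc j) v) \<and>
      flow_at n B (Suc j) v = (\<Sum>f\<in>Fs (Suc j) v. \<Prod>k=1..Suc j. B (f k) k)"
      using fin by simp
  qed
qed

lemma mu_per: "mu n B (toor n) = per n B"
proof -
  have "mu n B (toor n) = (\<Sum>f\<in>Fs n {1..n}. \<Prod>k=1..n. B (f k) k)"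
    using flow_formula[of n n B] by (simp add: mu_def toor_def)
  also have "Fs n {1..n} = {p. p permutes {1..n}}"
    by (auto simp: Fs_def intro: bij_imp_permutes permutes_imp_bij permutes_not_in)
  also have "(\<Sum>f\<in>{p. p permutes {1..n}}. \<Prod>k=1..n. B (f k) k)
      = (\<Sum>f\<in>{p. p permutes {1..n}}. \<Prod>i=1..n. B i (inv f i))"
  proof (rule sum.cong[OF refl])
    fix f assume "f \<in> {p. p permutes {1..n}}"
    then have p: "f permutes {1..n}" by simp
    have "(\<Prod>i=1..n. B i (inv f i)) = (\<Prod>i=1..n. (\<lambda>k. B (f k) k) (inv f i))"
      by (simp add: permutes_inverses[OF p])
    also have "\<dots> = (\<Prod>k=1..n. B (f k) k)"
      by (rule prod.reindex_bij_betw[OF permutes_imp_bij[OF permutes_inv[OF p]]])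
    finally show "(\<Prod>k=1..n. B (f k) k) = (\<Prod>i=1..n. B i (inv f i))" by simp
  qed
  also have "\<dots> = per n B"
    unfolding per_def by (rule sum_permutations_inverse[symmetric])
  finally show ?thesis .
qed

lemma edges_sub: "e \<in> trellis_edges n \<Longrightarrow> fst e \<subseteq> {1..n} \<and> snd e \<subseteq> {1..n}"
  by (auto simp: trellis_edges_def)

lemma fin_edges: "finite (trellis_edges n)"
proof (rule finite_subset)
  show "trellis_edges n \<subseteq> Pow {1..n} \<times> Pow {1..n}" by (auto simp: trellis_edges_def)
qed auto

lemma sum_card_P:
  "(\<Sum>v\<in>{v. v \<subseteq> {1..n} \<and> P (card v)}. card v) = (\<Sum>k\<in>{k. k \<le> n \<and> P k}. k * (n choose k))"
proof -
  let ?S = "{v. v \<subseteq> {1..n} \<and> P (card v)}"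
  let ?T = "{k. k \<le> n \<and> P k}"
  have fS: "finite ?S" by (rule finite_subset[of _ "Pow {1..n}"]) auto
  have fT: "finite ?T" by auto
  have img: "card ` ?S \<subseteq> ?T"
  proof
    fix k assume "k \<in> card ` ?S"
    then obtain v where v: "v \<subseteq> {1..n}" "P (card v)" "k = card v" by auto
    have "card v \<le> card {1..n}" by (rule card_mono[OF _ v(1)]) simp
    then show "k \<in> ?T" using v by simp
  qed
  have "(\<Sum>v\<in>?S. card v) = (\<Sum>k\<in>?T. \<Sum>v\<in>{v\<in>?S. card v = k}. card v)"
    by (rule sum.group[OF fS fT img, symmetric])
  also have "\<dots> = (\<Sum>k\<in>?T. k * (n choose k))"
  proof (rule sum.cong[OF refl])
    fix k assume "k \<in> ?T"
    then have eq: "{v\<in>?S. card v = k} = {B. B \<subseteq> {1..n} \<and> card B = k}" by auto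
    have "(\<Sum>v\<in>{v\<in>?S. card v = k}. card v) = (\<Sum>v\<in>{v\<in>?S. card v = k}. k)"
      by (rule sum.cong) auto
    also have "\<dots> = k * card {B. B \<subseteq> {1..n} \<and> card B = k}" unfolding eq by simp
    also have "\<dots> = k * (n choose k)" by (simp add: n_subsets)
    finally show "(\<Sum>v\<in>{v\<in>?S. card v = k}. card v) = k * (n choose k)" .
  qed
  finally show ?thesis .
qed

lemma card_edges_P:
  "card {e \<in> trellis_edges n. P (card (snd e))} = (\<Sum>k\<in>{k. k \<le> n \<and> P k}. k * (n choose k))"
proof -
  let ?S = "{v. v \<subseteq> {1..n} \<and> P (card v)}"
  have fS: "finite ?S" by (rule finite_subset[of _ "Pow {1..n}"]) auto
  have eq: "{e \<in> trellis_edges n. P (card (snd e))} = (\<Union>v\<in>?S. {e \<in> trellis_edges n. snd e = v})"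
    using edges_sub by fastforce
  have "card (\<Union>v\<in>?S. {e \<in> trellis_edges n. snd e = v}) = (\<Sum>v\<in>?S. card {e \<in> trellis_edges n. snd e = v})"
    by (rule card_UN_disjoint[OF fS]) (auto intro: finite_subset[OF _ fin_edges])
  also have "\<dots> = (\<Sum>v\<in>?S. card v)"
    by (rule sum.cong) (auto simp: card_edges_into)
  finally show ?thesis using eq sum_card_P by simp
qed

lemma sum_card_all: "(\<Sum>v\<in>{v. v \<subseteq> {1..n}}. card v) = n * 2 ^ (n - 1)"
  using sum_card_P[of n "\<lambda>_. True"] by (simp add: atMost_def[symmetric] choose_linear_sum)

lemma card_edges_all: "card (trellis_edges n) = n * 2 ^ (n - 1)"
  using card_edges_P[of n "\<lambda>_. True"] by (simp add: atMost_def[symmetric] choose_linear_sum)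

lemma int_aux: "(a::int) = x * q - (p - 1) \<Longrightarrow> p = 2 * q \<Longrightarrow> a = (x - 2) * q + 1"
  by (simp add: algebra_simps)

lemma add_count_eq:
  assumes "n \<ge> 2"
  shows "int (add_count n) = (int n - 2) * 2 ^ (n - 1) + 1"
proof -
  let ?V = "{v. v \<subseteq> {1..n}} - {{}}"
  have fV: "finite ?V" by (rule finite_subset[of _ "Pow {1..n}"]) auto
  have "add_count n = (\<Sum>v\<in>?V. card v - 1)"
    unfolding add_count_def trellis_vertices_def
    by (rule sum.cong) (auto simp: card_edges_into)
  then have "int (add_count n) = (\<Sum>v\<in>?V. int (card v - 1))" by simp
  also have "\<dots> = (\<Sum>v\<in>?V. int (card v) - 1)"
  proof (rule sum.cong[OF refl])
    fix v assume "v \<in> ?V"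
    then have "card v \<ge> 1" using finite_subset[of v "{1..n}"] by (auto simp: Suc_le_eq card_gt_0_iff)
    then show "int (card v - 1) = int (card v) - 1" by (simp add: of_nat_diff)
  qed
  also have "\<dots> = (\<Sum>v\<in>?V. int (card v)) - int (card ?V)"
    by (simp add: sum_subtractf)
  also have "(\<Sum>v\<in>?V. int (card v)) = int (\<Sum>v\<in>{v. v \<subseteq> {1..n}}. card v)"
  proof -
    have "(\<Sum>v\<in>{v. v \<subseteq> {1..n}}. card v) = card ({}::nat set) + (\<Sum>v\<in>?V. card v)"
      by (rule sum.remove) (auto intro: finite_subset[of _ "Pow {1..n}"])
    then show ?thesis by simp
  qed
  also have "card ?V = 2 ^ n - 1"
  proof -
    have "card {v. v \<subseteq> {1..n}} = 2 ^ n" using card_Pow[of "{1..n}"] by (simp add: Pow_def)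
    moreover have "finite {v. v \<subseteq> {1..(n::nat)}}" by auto
    ultimately show ?thesis by (simp add: card_Diff_singleton)
  qed
  also have "int (2 ^ n - 1) = 2 ^ n - 1" by (simp add: of_nat_diff)
  finally have "int (add_count n) = int (\<Sum>v\<in>{v. v \<subseteq> {1..n}}. card v) - (2 ^ n - 1)"
    by simp
  then have "int (add_count n) = int n * 2 ^ (n - 1) - (2 ^ n - 1)"
    unfolding sum_card_all by simp
  moreover have "(2::int) ^ n = 2 * 2 ^ (n - 1)" using assms
    by (metis Suc_diff_1 less_le_trans pos2 power_Suc zero_less_numeral)
  ultimately show ?thesis by (rule int_aux)
qed

lemma ceil_half: "\<lceil>real n / 2\<rceil> = int (n - n div 2)"
proof (cases "even n")
  case True
  then obtain m where m: "n = 2 * m" by blast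
  have "real n / 2 = real m" using m by simp
  moreover have "n - n div 2 = m" using m by simp
  ultimately show ?thesis by simp
next
  case False
  then obtain m where m: "n = 2 * m + 1" using oddE by blast
  have "real n / 2 = real m + 1/2" using m by simp
  moreover have "\<lceil>real m + 1/2\<rceil> = int m + 1"
    by (rule ceiling_unique) auto
  moreover have "n - n div 2 = m + 1" using m by simp
  ultimately show ?thesis by (simp only: of_nat_add of_nat_1)
qed

lemma mult_div_eq:
  assumes "n \<ge> 2" and t: "t = n div 2 + 1"
  shows "int (mult_div_count n t)
        = int (n * 2 ^ (n - 1)) - \<lceil>real n / 2\<rceil> * int (n choose (n div 2)) + int (n ^ 2) - int n"
proof -
  have t1: "t \<noteq> 1" "t \<le> n" "1 \<le> n" "1 \<le> t" using assms by auto
  have c1: "card {(i, j). i \<in> {1..n} \<and> j \<in> {1..n} \<and> j \<noteq> t} = n * (n - 1)"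
  proof -
    have "{(i, j). i \<in> {1..n} \<and> j \<in> {1..n} \<and> j \<noteq> t} = {1..n} \<times> ({1..n} - {t})" by auto
    moreover have "t \<in> {1..n}" using t1 by auto
    ultimately show ?thesis by (simp add: card_cartesian_product)
  qed
  have eqE: "{e \<in> trellis_edges n. fst e \<noteq> {} \<and> snd e \<notin> trellis_layer n t}
      = {e \<in> trellis_edges n. card (snd e) \<notin> {1, t}}"
  proof (rule Collect_cong)
    fix e
    show "(e \<in> trellis_edges n \<and> fst e \<noteq> {} \<and> snd e \<notin> trellis_layer n t) =
          (e \<in> trellis_edges n \<and> card (snd e) \<notin> {1, t})"
    proof (cases "e \<in> trellis_edges n")
      case False then show ?thesis by simp
    next
      case e: True
      obtain u v where uv: "e = (u, v)" by (cases e)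
      have sub: "u \<subseteq> {1..n}" "v \<subseteq> {1..n}" using e uv by (auto simp: trellis_edges_def)
      have fu: "finite u" using sub(1) finite_subset by blast
      have cv: "card v = Suc (card u)" using e uv by (simp add: trellis_edges_def)
      have A: "u \<noteq> {} \<longleftrightarrow> card v \<noteq> 1" using fu cv by auto
      have B: "v \<notin> trellis_layer n t \<longleftrightarrow> card v \<noteq> t"
        using sub(2) by (simp add: trellis_layer_def)
      show ?thesis using A B e uv by simp
    qed
  qed
  let ?f = "\<lambda>k. k * (n choose k)"
  define R where "R = (\<Sum>k\<in>{..n} - {1} - {t}. ?f k)"
  have setK: "{k. k \<le> n \<and> k \<notin> {1, t}} = {..n} - {1} - {t}" by auto
  have r1: "(\<Sum>k\<in>{..n}. ?f k) = ?f 1 + (\<Sum>k\<in>{..n} - {1}. ?f k)"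
    by (rule sum.remove) (use t1 in auto)
  have r2: "(\<Sum>k\<in>{..n} - {1}. ?f k) = ?f t + R"
    unfolding R_def by (rule sum.remove) (use t1 in auto)
  have a: "(\<Sum>k\<in>{..n}. ?f k) = n * 2 ^ (n - 1)" by (rule choose_linear_sum)
  have f1: "?f 1 = n" by simp
  have natR: "n * 2 ^ (n - 1) = n + (?f t + R)" using a r1 r2 f1 by linarith
  obtain k where k: "k = n div 2" and tk: "t = Suc k" using t by simp
  have "?f t = (n - k) * (n choose k)"
    unfolding tk using binomial_absorption[of k n] binomial_absorb_comp[of n k] by simp
  then have ft: "int (?f t) = \<lceil>real n / 2\<rceil> * int (n choose (n div 2))"
    by (simp add: ceil_half k)
  have cR: "card {e \<in> trellis_edges n. card (snd e) \<notin> {1, t}} = R"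
    unfolding R_def setK[symmetric] by (rule card_edges_P)
  have M: "mult_div_count n t = n * (n - 1) + R + n"
    unfolding mult_div_count_def c1 eqE cR by simp
  have i1: "int (mult_div_count n t) = int (n * (n - 1)) + int R + int n"
    unfolding M by (simp only: of_nat_add)
  have i2: "int (n * 2 ^ (n - 1)) = int n + (int (?f t) + int R)"
    unfolding natR by (simp only: of_nat_add)
  have i3: "int (n * (n - 1)) = int (n ^ 2) - int n" using t1
    by (simp add: power2_eq_square of_nat_diff algebra_simps)
  show ?thesis using i1 i2 i3 ft by linarith
qed

theorem theorem4:
  fixes n :: nat and A :: "nat \<Rightarrow> nat \<Rightarrow> 'a::field" and t :: nat
  assumes "n \<ge> 2"
    and "t = n div 2 + 1"
    and "\<forall>i \<in> {1..n}. A i t \<noteq> 0"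
  shows "per n A = (\<Prod>i=1..n. A i t) * per n (col_normalize A t)
    \<and> mu n (col_normalize A t) (toor n) = per n (col_normalize A t)
    \<and> per n A = (\<Prod>i=1..n. A i t) * mu n (col_normalize A t) (toor n)
    \<and> (\<forall>e \<in> trellis_edges n. snd e \<in> trellis_layer n t \<longrightarrow> trellis_label (col_normalize A t) e = 1)
    \<and> int (mult_div_count n t)
        = int (n * 2 ^ (n - 1)) - \<lceil>real n / 2\<rceil> * int (n choose (n div 2)) + int (n ^ 2) - int n
    \<and> int (add_count n) = (int n - 2) * 2 ^ (n - 1) + 1"
proof -
  have P1: "per n A = (\<Prod>i=1..n. A i t) * per n (col_normalize A t)"
  proof -
    have "(\<Prod>i=1..n. A i t) * per n (col_normalize A t)
        = (\<Sum>\<sigma> | \<sigma> permutes {1..n}. (\<Prod>i=1..n. A i t) * (\<Prod>i=1..n. A i (\<sigma> i) / A i t))"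
      by (simp add: per_def col_normalize_def sum_distrib_left)
    also have "\<dots> = (\<Sum>\<sigma> | \<sigma> permutes {1..n}. \<Prod>i=1..n. A i (\<sigma> i))"
    proof (rule sum.cong[OF refl])
      fix \<sigma>
      have "(\<Prod>i=1..n. A i t) * (\<Prod>i=1..n. A i (\<sigma> i) / A i t) = (\<Prod>i=1..n. A i t * (A i (\<sigma> i) / A i t))"
        by (rule prod.distrib[symmetric])
      also have "\<dots> = (\<Prod>i=1..n. A i (\<sigma> i))"
        by (rule prod.cong) (use assms(3) in auto)
      finally show "(\<Prod>i=1..n. A i t) * (\<Prod>i=1..n. A i (\<sigma> i) / A i t) = (\<Prod>i=1..n. A i (\<sigma> i))" .
    qed
    finally show ?thesis by (simp add: per_def)
  qed
  have P4: "\<forall>e \<in> trellis_edges n. snd e \<in> trellis_layer n t \<longrightarrow> trellis_label (col_normalize A t) e = 1"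
  proof (intro ballI impI)
    fix e assume e: "e \<in> trellis_edges n" and l: "snd e \<in> trellis_layer n t"
    obtain u v where uv: "e = (u, v)" by (cases e)
    then obtain i where i: "i \<in> v" "u = v - {i}" using edge_char e by blast
    have "i \<in> {1..n}" using i e uv edges_sub by fastforce
    then have "A i t \<noteq> 0" using assms(3) by blast
    moreover have "card v = t" using l uv by (simp add: trellis_layer_def)
    ultimately show "trellis_label (col_normalize A t) e = 1"
      using i uv by (simp add: trellis_label_def col_normalize_def edge_index_simp)
  qed
  show ?thesis
  proof (intro conjI)
    show "per n A = (\<Prod>i=1..n. A i t) * per n (col_normalize A t)" by (rule P1)
    show "mu n (col_normalize A t) (toor n) = per n (col_normalize A t)" by (rule mu_per)
    show "per n A = (\<Prod>i=1..n. A i t) * mu n (col_normalize A t) (toor n)"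
      unfolding mu_per by (rule P1)
    show "\<forall>e \<in> trellis_edges n. snd e \<in> trellis_layer n t \<longrightarrow> trellis_label (col_normalize A t) e = 1"
      by (rule P4)
    show "int (mult_div_count n t)
        = int (n * 2 ^ (n - 1)) - \<lceil>real n / 2\<rceil> * int (n choose (n div 2)) + int (n ^ 2) - int n"
      by (rule mult_div_eq[OF assms(1,2)])
    show "int (add_count n) = (int n - 2) * 2 ^ (n - 1) + 1" by (rule add_count_eq[OF assms(1)])
  qed
qed

end
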